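(* Let $\ell$ be a nondegenerate Hermitian form on a complex $n$-dimensional space $W$, $A$ an $\ell$-self-adjoint antilinear operator, and $\lambda^2>0$ an eigenvalue of $A^2$. Let $s_1$ be the least positive integer with $\ker(A^2-\lambda^2I)^{s_1}=\ker(A^2-\lambda^2I)^{n}$. Then there is an $s_1$-dimensional $A$-invariant subspace $V\subset\ker(A^2-\lambda^2I)^n$ on which $\ell$ is nondegenerate, and a basis of $V$ with respect to which $\ell|_V$ and $A|_V$ are represented by $\pm S_{s_1}$ and $J_{|\lambda|,s_1}$ respectively.
   Context: An antilinear operator satisfies $A(zv+w)=\bar zAv+Aw$; $\ell$ is linear in the first argument and conjugate-linear in the second; $A$ is $\ell$-self-adjoint if $\ell(Av,w)=\ell(Aw,v)$. In a basis $e_1,\dots,e_k$, $\ell$ is represented by $H_{i,j}=\ell(e_j,e_i)$ and $A$ by $C$ with $Ae_i=\sum_m C_{m,i}e_m$. $S_k$ has $(i,j)$ entry $1$ if $i+j=k+1$, else $0$; $J_{\mu,k}=\mu I_k+T_k$ with $T_k$ having $(i,j)$ entry $1$ if $j-i=1$, else $0$. *)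

theory Defs
  imports "HOL-Analysis.Analysis"
begin

text \<open>The complex n-dimensional space W is modelled as complex^'n, n = CARD('n).\<close>

definition sesquilinear :: "(complex^'n \<Rightarrow> complex^'n \<Rightarrow> complex) \<Rightarrow> bool" where
  "sesquilinear l \<longleftrightarrow>
     (\<forall>z v w u. l (z *s v + w) u = z * l v u + l w u) \<and>
     (\<forall>z v w u. l u (z *s v + w) = cnj z * l u v + l u w)"

definition hermitian_form :: "(complex^'n \<Rightarrow> complex^'n \<Rightarrow> complex) \<Rightarrow> bool" where
  "hermitian_form l \<longleftrightarrow> sesquilinear l \<and> (\<forall>v w. l w v = cnj (l v w))"

definition nondegenerate_on :: "(complex^'n \<Rightarrow> complex^'n \<Rightarrow> complex) \<Rightarrow> (complex^'n) set \<Rightarrow> bool" where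
  "nondegenerate_on l V \<longleftrightarrow> (\<forall>v\<in>V. (\<forall>w\<in>V. l v w = 0) \<longrightarrow> v = 0)"

definition antilinear :: "(complex^'n \<Rightarrow> complex^'n) \<Rightarrow> bool" where
  "antilinear A \<longleftrightarrow> (\<forall>z v w. A (z *s v + w) = cnj z *s A v + A w)"

definition l_self_adjoint :: "(complex^'n \<Rightarrow> complex^'n \<Rightarrow> complex) \<Rightarrow> (complex^'n \<Rightarrow> complex^'n) \<Rightarrow> bool" where
  "l_self_adjoint l A \<longleftrightarrow> (\<forall>v w. l (A v) w = l (A w) v)"

definition gen_ker :: "(complex^'n \<Rightarrow> complex^'n) \<Rightarrow> complex \<Rightarrow> nat \<Rightarrow> (complex^'n) set" where
  "gen_ker A c k = {v. ((\<lambda>x. A (A x) - c *s x) ^^ k) v = 0}"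

definition cspan_list :: "nat \<Rightarrow> (nat \<Rightarrow> complex^'n) \<Rightarrow> (complex^'n) set" where
  "cspan_list s e = {v. \<exists>c. v = (\<Sum>i=1..s. c i *s e i)}"

definition cindependent_list :: "nat \<Rightarrow> (nat \<Rightarrow> complex^'n) \<Rightarrow> bool" where
  "cindependent_list s e \<longleftrightarrow> (\<forall>c. (\<Sum>i=1..s. c i *s e i) = 0 \<longrightarrow> (\<forall>i\<in>{1..s}. c i = 0))"

text \<open>S_k and J_{mu,k}, as functions of (row, column), indices 1..k\<close>
definition S_mat :: "nat \<Rightarrow> nat \<Rightarrow> nat \<Rightarrow> complex" where
  "S_mat k i j = (if i + j = k + 1 then 1 else 0)"

definition T_mat :: "nat \<Rightarrow> nat \<Rightarrow> nat \<Rightarrow> complex" where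
  "T_mat k i j = (if int j - int i = 1 then 1 else 0)"

definition J_mat :: "complex \<Rightarrow> nat \<Rightarrow> nat \<Rightarrow> nat \<Rightarrow> complex" where
  "J_mat \<mu> k i j = (if i = j then \<mu> else 0) + T_mat k i j"

end

theory Submission
  imports Defs
begin


definition clin :: "(complex^'n \<Rightarrow> complex^'n) \<Rightarrow> bool" where
  "clin f \<longleftrightarrow> (\<forall>z v w. f (z *s v + w) = z *s f v + f w)"

lemma clin_0: "clin f \<Longrightarrow> f 0 = 0"
  unfolding clin_def by (metis add_cancel_right_left vector_smult_lid)

lemma clin_add: "clin f \<Longrightarrow> f (x + y) = f x + f y"
  unfolding clin_def by (metis vector_smult_lid)

lemma clin_scale: "clin f \<Longrightarrow> f (c *s x) = c *s f x"
  using clin_0[of f] unfolding clin_def by (metis add.right_neutral)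

lemma clin_linear: "clin f \<Longrightarrow> Vector_Spaces.linear (*s) (*s) f"
  unfolding Vector_Spaces.linear_iff
  by (simp add: vec.vector_space_axioms clin_add clin_scale)

lemma clin_funpow: "clin f \<Longrightarrow> clin (f^^k)"
  by (induction k) (auto simp: clin_def)

lemma ker_mono: assumes "clin f" "a \<le> b" "(f^^a) v = 0" shows "(f^^b) v = 0"
proof -
  have "(f^^b) v = (f^^(b-a)) ((f^^a) v)" using assms(2)
    by (metis funpow_add le_add_diff_inverse2 o_apply)
  then show ?thesis using assms clin_0[OF clin_funpow[OF assms(1)]] by simp
qed

lemma ker_stab_from:
  assumes "clin f" "\<forall>v. (f^^(Suc k)) v = 0 \<longrightarrow> (f^^k) v = 0"
  shows "(f^^(k+j)) v = 0 \<Longrightarrow> (f^^k) v = 0"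
proof (induction j arbitrary: v)
  case 0 then show ?case by simp
next
  case (Suc j)
  have "(f^^(k+j)) (f v) = 0" using Suc.prems
    by (metis add_Suc_right funpow_Suc_right o_apply)
  then have "(f^^k) (f v) = 0" using Suc.IH by blast
  then have "(f^^(Suc k)) v = 0" by (metis funpow_Suc_right o_apply)
  then show ?case using assms(2) by blast
qed

lemma ker_stab_exists:
  fixes f :: "complex^'n \<Rightarrow> complex^'n"
  assumes "clin f"
  shows "\<exists>k\<le>CARD('n). \<forall>v. (f^^(Suc k)) v = 0 \<longrightarrow> (f^^k) v = 0"
proof (rule ccontr)
  assume H: "\<not> ?thesis"
  define Kr where "Kr j = {v. (f^^j) v = 0}" for j
  have sub: "vec.subspace (Kr j)" for j
    unfolding Kr_def using vec.linear_subspace_kernel[OF clin_linear[OF clin_funpow[OF assms]]] .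
  have "j \<le> Suc CARD('n) \<Longrightarrow> j \<le> vec.dim (Kr j)" for j
  proof (induction j)
    case 0 then show ?case by simp
  next
    case (Suc j)
    then have jle: "j \<le> CARD('n)" by simp
    from H jle obtain v where v: "(f^^(Suc j)) v = 0" "(f^^j) v \<noteq> 0" by auto
    have "Kr j \<subseteq> Kr (Suc j)" unfolding Kr_def using ker_mono[OF assms, of j "Suc j"] by auto
    moreover have "v \<in> Kr (Suc j) - Kr j" using v unfolding Kr_def by auto
    ultimately have "vec.span (Kr j) \<subset> vec.span (Kr (Suc j))"
      using sub by (auto simp: vec.span_eq_iff[THEN iffD2])
    then have "vec.dim (Kr j) < vec.dim (Kr (Suc j))" by (rule vec.dim_psubset)
    then show ?case using Suc by simp
  qed
  then have "Suc CARD('n) \<le> vec.dim (Kr (Suc CARD('n)))" by simp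
  moreover have "vec.dim (Kr (Suc CARD('n))) \<le> CARD('n)"
    using vec.dim_subset[of "Kr (Suc CARD('n))" UNIV] vec_dim_card[where 'a=complex and 'n='n] by simp
  ultimately show False by simp
qed

lemma ker_all_in_n:
  fixes f :: "complex^'n \<Rightarrow> complex^'n"
  assumes "clin f" "(f^^m) v = 0"
  shows "(f^^CARD('n)) v = 0"
proof -
  obtain k where k: "k \<le> CARD('n)" "\<forall>v. (f^^(Suc k)) v = 0 \<longrightarrow> (f^^k) v = 0"
    using ker_stab_exists[OF assms(1)] by blast
  have "(f^^(k + m)) v = 0" using ker_mono[OF assms(1) _ assms(2), of "k+m"] by simp
  then have "(f^^k) v = 0" using ker_stab_from[OF assms(1) k(2)] by blast
  then show ?thesis using ker_mono[OF assms(1) k(1)] by blast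
qed

lemma fitting:
  fixes g :: "complex^'n \<Rightarrow> complex^'n"
  assumes "clin g" "\<forall>v. g (g v) = 0 \<longrightarrow> g v = 0"
  shows "\<exists>z. g y = g (g z)"
proof -
  have lin: "Vector_Spaces.linear (*s) (*s) g" by (rule clin_linear[OF assms(1)])
  have sR: "vec.subspace (range g)" using vec.linear_subspace_image[OF lin vec.subspace_UNIV] .
  have "inj_on g (range g)"
  proof (rule inj_onI)
    fix x y assume "x \<in> range g" "y \<in> range g" "g x = g y"
    then obtain a b where ab: "x = g a" "y = g b" by auto
    have "g (g (a - b)) = 0" using \<open>g x = g y\<close> ab
      by (simp add: vec.linear_diff[OF lin])
    then have "g (a - b) = 0" using assms(2) by blast
    then show "x = y" using ab by (simp add: vec.linear_diff[OF lin])
  qed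
  then have "inj_on g (vec.span (range g))" using sR by (simp add: vec.span_eq_iff[THEN iffD2])
  then have "vec.dim (g ` range g) = vec.dim (range g)" by (rule vec.dim_image_eq[OF lin])
  moreover have "vec.subspace (g ` range g)" using vec.linear_subspace_image[OF lin sR] .
  moreover have "g ` range g \<subseteq> range g" by auto
  ultimately have "g ` range g = range g" using sR vec.subspace_dim_equal by (metis order_refl)
  then have "g y \<in> g ` range g" by auto
  then show ?thesis by auto
qed



definition rlin :: "(complex^'n \<Rightarrow> complex^'n) \<Rightarrow> bool" where
  "rlin f \<longleftrightarrow> (\<forall>(r::real) v w. f (complex_of_real r *s v + w) = complex_of_real r *s f v + f w)"

lemma rlin_0: "rlin f \<Longrightarrow> f 0 = 0"
  unfolding rlin_def by (metis add_cancel_right_left of_real_1 vector_smult_lid)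
lemma rlin_add: "rlin f \<Longrightarrow> f (x + y) = f x + f y"
  unfolding rlin_def by (metis of_real_1 vector_smult_lid)
lemma rlin_scale: "rlin f \<Longrightarrow> f (complex_of_real r *s x) = complex_of_real r *s f x"
  using rlin_0[of f] unfolding rlin_def by (metis add.right_neutral)
lemma rlin_neg: "rlin f \<Longrightarrow> f (- x) = - f x"
  using rlin_scale[of f "-1" x] by simp
lemma rlin_diff: "rlin f \<Longrightarrow> f (x - y) = f x - f y"
  using rlin_add[of f x "-y"] rlin_neg[of f y] by simp
lemma rlin_funpow: "rlin f \<Longrightarrow> rlin (f^^k)"
  by (induction k) (auto simp: rlin_def)
lemma rlin_ker_mono: assumes "rlin f" "a \<le> b" "(f^^a) v = 0" shows "(f^^b) v = 0"
proof -
  have "(f^^b) v = (f^^(b-a)) ((f^^a) v)" using assms(2)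
    by (metis funpow_add le_add_diff_inverse2 o_apply)
  then show ?thesis using assms rlin_0[OF rlin_funpow[OF assms(1)]] by simp
qed

lemma funpow_comm: assumes "\<And>v. f (g v) = g (f v)" shows "(f^^j) ((g^^k) v) = (g^^k) ((f^^j) v)"
proof -
  have 1: "f ((g^^k) v) = (g^^k) (f v)" for v
    by (induction k) (auto simp: assms)
  show ?thesis by (induction j) (auto simp: 1)
qed

locale ctx =
  fixes l :: "complex^'n \<Rightarrow> complex^'n \<Rightarrow> complex"
    and A :: "complex^'n \<Rightarrow> complex^'n"
    and mu :: real
  assumes herm: "hermitian_form l"
    and anti: "antilinear A"
    and sa: "l_self_adjoint l A"
    and mupos: "mu > 0"
begin

definition N where "N v = A (A v) - complex_of_real (mu\<^sup>2) *s v"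
definition T where "T v = A v - complex_of_real mu *s v"
definition P where "P v = A v + complex_of_real mu *s v"

lemma l_lin1: "l (z *s v + w) u = z * l v u + l w u"
  using herm unfolding hermitian_form_def sesquilinear_def by blast
lemma l_lin2: "l u (z *s v + w) = cnj z * l u v + l u w"
  using herm unfolding hermitian_form_def sesquilinear_def by blast
lemma l_herm: "l w v = cnj (l v w)"
  using herm unfolding hermitian_form_def by blast
lemma l_add1: "l (v + w) u = l v u + l w u" using l_lin1[of 1] by simp
lemma l_add2: "l u (v + w) = l u v + l u w" using l_lin2[of _ 1] by simp
lemma l_zero1[simp]: "l 0 u = 0" using l_add1[of 0 0] by simp
lemma l_zero2[simp]: "l u 0 = 0" using l_add2[of _ 0 0] by simp
lemma l_scale1: "l (z *s v) u = z * l v u" using l_lin1[of z v 0] by simp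
lemma l_scale2: "l u (z *s v) = cnj z * l u v" using l_lin2[of _ z v 0] by simp
lemma l_neg1: "l (- v) u = - l v u" using l_scale1[of "-1"] by simp
lemma l_neg2: "l u (- v) = - l u v" using l_scale2[of _ "-1"] by simp
lemma l_diff1: "l (v - w) u = l v u - l w u" using l_add1[of v "-w"] by (simp add: l_neg1)
lemma l_diff2: "l u (v - w) = l u v - l u w" using l_add2[of _ v "-w"] by (simp add: l_neg2)
lemma l_sa: "l (A v) w = l (A w) v" using sa unfolding l_self_adjoint_def by blast

lemma A_lin: "A (z *s v + w) = cnj z *s A v + A w" using anti unfolding antilinear_def by blast
lemma A_add: "A (v + w) = A v + A w" using A_lin[of 1] by simp
lemma A_zero[simp]: "A 0 = 0" using A_add[of 0 0] by simp
lemma A_scale: "A (z *s v) = cnj z *s A v" using A_lin[of z v 0] by simp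
lemma A_neg: "A (- v) = - A v" using A_scale[of "-1"] by simp
lemma A_diff: "A (v - w) = A v - A w" using A_add[of v "-w"] by (simp add: A_neg)
lemma A_rscale: "A (complex_of_real r *s v) = complex_of_real r *s A v" by (simp add: A_scale)

lemma T_rlin: "rlin T" unfolding rlin_def T_def
  by (simp add: A_add A_rscale vec.scale_right_distrib algebra_simps)
lemma P_rlin: "rlin P" unfolding rlin_def P_def
  by (simp add: A_add A_rscale vec.scale_right_distrib algebra_simps)
lemma N_clin: "clin N" unfolding clin_def N_def
  by (simp add: A_add A_scale vec.scale_right_distrib algebra_simps)

lemma TP: "T (P v) = N v" unfolding T_def P_def N_def
  by (simp add: A_add A_diff A_rscale algebra_simps power2_eq_square)
lemma PT: "P (T v) = N v" unfolding T_def P_def N_def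
  by (simp add: A_add A_diff A_rscale A_scale algebra_simps power2_eq_square)
lemma TP_comm: "T (P v) = P (T v)" by (simp add: TP PT)

lemma N_pow: "(N^^k) v = (T^^k) ((P^^k) v)"
proof (induction k)
  case 0 then show ?case by simp
next
  case (Suc k)
  have "(N^^Suc k) v = T (P ((T^^k) ((P^^k) v)))" by (simp add: Suc TP)
  also have "\<dots> = T ((T^^k) (P ((P^^k) v)))"
    using funpow_comm[of T P k 1, OF TP_comm] by simp
  finally show ?case by (metis comp_apply funpow.simps(2) funpow_Suc_right)
qed

lemma PminusT: "P x - T x = complex_of_real (2*mu) *s x"
  unfolding P_def T_def by (simp add: vec.scale_left_distrib[symmetric])

lemma T_ii: "T (\<i> *s z) = - \<i> *s P z"
  unfolding T_def P_def by (simp add: A_scale vec.scale_right_distrib)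

lemma T_pow_ii: "(T^^k) (\<i> *s z) = (\<i> * (-1)^k) *s (P^^k) z"
proof (induction k arbitrary: z)
  case 0 then show ?case by simp
next
  case (Suc k)
  have "(T^^Suc k) (\<i> *s z) = (T^^k) (\<i> *s (- P z))"
    by (simp only: funpow_Suc_right o_apply T_ii vec.scale_minus_left vec.scale_minus_right)
  also have "\<dots> = (\<i> * (-1)^k) *s (P^^k) (- P z)" by (rule Suc)
  also have "\<dots> = (\<i> * (-1)^Suc k) *s (P^^Suc k) z"
    by (simp only: rlin_neg[OF rlin_funpow[OF P_rlin]] funpow_Suc_right o_apply vec.scale_minus_right) simp
  finally show ?case .
qed

end


context ctx begin

lemma l_cnj: "cnj (l v w) = l w v" using l_herm[of w v] by simp

lemma l_T_eq: "l (T x) y + complex_of_real mu * l x y = l (T y) x + complex_of_real mu * l y x"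
proof -
  have "A x = T x + complex_of_real mu *s x" "A y = T y + complex_of_real mu *s y"
    unfolding T_def by simp_all
  then show ?thesis using l_sa[of x y] by (simp add: l_add1 l_scale1)
qed

lemma F_rec: "complex_of_real (2*mu) * (l x y - l y x)
   = - (l (T x) y - l y (T x)) - (l x (T y) - l (T y) x)"
proof -
  have E1: "l (T x) y + complex_of_real mu * l x y = l (T y) x + complex_of_real mu * l y x"
    by (rule l_T_eq)
  have "cnj (l (T x) y + complex_of_real mu * l x y) = cnj (l (T y) x + complex_of_real mu * l y x)"
    using E1 by simp
  then have E2: "l y (T x) + complex_of_real mu * l y x = l x (T y) + complex_of_real mu * l x y"
    by (simp only: complex_cnj_add complex_cnj_mult complex_cnj_complex_of_real l_cnj)
  show ?thesis unfolding of_real_mult of_real_numeral using E1 E2 by algebra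
qed

lemma real_sym_aux:
  "\<forall>j k x y. j + k = n \<longrightarrow> (T^^j) x = 0 \<longrightarrow> (T^^k) y = 0 \<longrightarrow> l x y = l y x"
proof (induction n rule: less_induct)
  case (less n)
  show ?case
  proof (intro allI impI)
    fix j k x y assume jk: "j + k = n" and x: "(T^^j) x = 0" and y: "(T^^k) y = 0"
    show "l x y = l y x"
    proof (cases "j = 0 \<or> k = 0")
      case True then show ?thesis using x y by auto
    next
      case False
      then obtain j' k' where j': "j = Suc j'" and k': "k = Suc k'" by (metis not0_implies_Suc)
      have x': "(T^^j') (T x) = 0" using x j' by (simp add: funpow_Suc_right del: funpow.simps)
      have y': "(T^^k') (T y) = 0" using y k' by (simp add: funpow_Suc_right del: funpow.simps)
      have 1: "l (T x) y = l y (T x)" using less[of "j' + k"] x' y jk j' by auto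
      have 2: "l x (T y) = l (T y) x" using less[of "j + k'"] x y' jk k' by auto
      have "complex_of_real (2*mu) * (l x y - l y x) = 0" using F_rec[of x y] 1 2 by simp
      then show ?thesis using mupos by simp
    qed
  qed
qed

definition nil where "nil x \<longleftrightarrow> (\<exists>j. (T^^j) x = 0)"

lemma real_sym: "nil x \<Longrightarrow> nil y \<Longrightarrow> l x y = l y x"
  unfolding nil_def using real_sym_aux by blast

lemma nil_T: "nil x \<Longrightarrow> nil (T x)"
  unfolding nil_def by (metis funpow_Suc_right o_apply funpow.simps(2) rlin_0[OF T_rlin])

lemma nil_Tpow: "nil x \<Longrightarrow> nil ((T^^k) x)"
  by (induction k) (auto simp: nil_T)

lemma nil_add: assumes "nil x" "nil y" shows "nil (x + y)"
proof -
  obtain a b where "(T^^a) x = 0" "(T^^b) y = 0" using assms unfolding nil_def by blast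
  then have "(T^^(max a b)) x = 0" "(T^^(max a b)) y = 0"
    using rlin_ker_mono[OF T_rlin] by (metis max.cobounded1 max.cobounded2)+
  then show ?thesis unfolding nil_def using rlin_add[OF rlin_funpow[OF T_rlin]] by (metis add_0)
qed

lemma nil_scale: assumes "nil x" shows "nil (complex_of_real r *s x)"
  using assms unfolding nil_def using rlin_scale[OF rlin_funpow[OF T_rlin]] by (metis vec.scale_zero_right)

lemma T_sym: "nil x \<Longrightarrow> nil y \<Longrightarrow> l (T x) y = l x (T y)"
  using l_T_eq[of x y] real_sym[of x y] real_sym[of "T y" x] nil_T by simp

lemma Tpow_sym: "nil x \<Longrightarrow> nil y \<Longrightarrow> l ((T^^k) x) y = l x ((T^^k) y)"
proof (induction k arbitrary: y)
  case 0 then show ?case by simp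
next
  case (Suc k)
  have "l ((T^^Suc k) x) y = l (T ((T^^k) x)) y" by simp
  also have "\<dots> = l ((T^^k) x) (T y)" using T_sym nil_Tpow Suc by blast
  also have "\<dots> = l x ((T^^k) (T y))" using Suc nil_T by blast
  finally show ?case by (simp add: funpow_Suc_right del: funpow.simps)
qed

end


context ctx begin

lemma decomp_aux:
  "\<forall>j k x. j + k = n \<longrightarrow> (T^^j) ((P^^k) x) = 0 \<longrightarrow>
      (\<exists>a b. x = a + b \<and> (T^^j) a = 0 \<and> (P^^k) b = 0)"
proof (induction n rule: less_induct)
  case (less n)
  show ?case
  proof (intro allI impI)
    fix j k x assume jk: "j + k = n" and x: "(T^^j) ((P^^k) x) = 0"
    show "\<exists>a b. x = a + b \<and> (T^^j) a = 0 \<and> (P^^k) b = 0"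
    proof (cases "j = 0 \<or> k = 0")
      case True
      then show ?thesis
      proof
        assume "j = 0" then show ?thesis using x by (intro exI[of _ 0] exI[of _ x]) simp
      next
        assume "k = 0" then show ?thesis using x
          by (intro exI[of _ x] exI[of _ 0]) (simp add: rlin_0[OF rlin_funpow[OF T_rlin]])
      qed
    next
      case False
      then obtain j' k' where j': "j = Suc j'" and k': "k = Suc k'" by (metis not0_implies_Suc)
      have "(T^^j) ((P^^k') (P x)) = 0" using x k' by (simp add: funpow_Suc_right del: funpow.simps)
      moreover have "\<forall>ja kk x. ja + kk = j + k' \<longrightarrow> (T^^ja) ((P^^kk) x) = 0 \<longrightarrow>
         (\<exists>a b. x = a + b \<and> (T^^ja) a = 0 \<and> (P^^kk) b = 0)"
        using less[of "j + k'"] jk k' by simp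
      ultimately obtain a1 b1 where ab1: "P x = a1 + b1" "(T^^j) a1 = 0" "(P^^k') b1 = 0"
        by blast
      have "(T^^j') ((P^^k) (T x)) = (T^^j') (T ((P^^k) x))"
        using funpow_comm[of P T k 1, OF TP_comm[symmetric]] by simp
      also have "\<dots> = 0" using x j' by (simp add: funpow_Suc_right del: funpow.simps)
      finally have "(T^^j') ((P^^k) (T x)) = 0" .
      moreover have "\<forall>ja kk x. ja + kk = j' + k \<longrightarrow> (T^^ja) ((P^^kk) x) = 0 \<longrightarrow>
         (\<exists>a b. x = a + b \<and> (T^^ja) a = 0 \<and> (P^^kk) b = 0)"
        using less[of "j' + k"] jk j' by simp
      ultimately obtain a2 b2 where ab2: "T x = a2 + b2" "(T^^j') a2 = 0" "(P^^k) b2 = 0"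
        by blast
      define r where "r = 1 / (2*mu)"
      have xe: "x = complex_of_real r *s (P x - T x)"
        using PminusT[of x] mupos unfolding r_def by simp
      have Ta2: "(T^^j) a2 = 0" using ab2(2) j' by (simp add: rlin_0[OF T_rlin])
      have Pb1: "(P^^k) b1 = 0" using ab1(3) k' by (simp add: rlin_0[OF P_rlin])
      show ?thesis
      proof (intro exI conjI)
        show "x = complex_of_real r *s (a1 - a2) + complex_of_real r *s (b1 - b2)"
          using xe ab1 ab2 by (simp add: vec.scale_right_diff_distrib vec.scale_right_distrib algebra_simps)
        show "(T^^j) (complex_of_real r *s (a1 - a2)) = 0"
          using ab1 Ta2 by (simp add: rlin_scale[OF rlin_funpow[OF T_rlin]] rlin_diff[OF rlin_funpow[OF T_rlin]] del: funpow.simps)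
        show "(P^^k) (complex_of_real r *s (b1 - b2)) = 0"
          using ab2 Pb1 by (simp add: rlin_scale[OF rlin_funpow[OF P_rlin]] rlin_diff[OF rlin_funpow[OF P_rlin]] del: funpow.simps)
      qed
    qed
  qed
qed

lemma decomp:
  assumes "(N^^s) x = 0"
  shows "\<exists>a b. x = a + \<i> *s b \<and> (T^^s) a = 0 \<and> (T^^s) b = 0"
proof -
  have "(T^^s) ((P^^s) x) = 0" using assms N_pow by simp
  then obtain a b where ab: "x = a + b" "(T^^s) a = 0" "(P^^s) b = 0" using decomp_aux by blast
  have "(T^^s) (\<i> *s (- b)) = 0" using ab(3)
    by (simp add: T_pow_ii rlin_neg[OF rlin_funpow[OF P_rlin]] rlin_neg[OF rlin_funpow[OF T_rlin]] del: funpow.simps)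
  moreover have "x = a + \<i> *s (\<i> *s (- b))" using ab by simp
  ultimately show ?thesis using ab(2) by blast
qed

lemma N_sa: "l (N v) w = l v (N w)"
proof -
  have 1: "l (A (A v)) w = l (A w) (A v)" using l_sa by simp
  have 2: "l v (A (A w)) = l (A w) (A v)"
    using l_herm[of v "A (A w)"] l_sa[of "A w" v] l_herm[of "A w" "A v"] by simp
  show ?thesis unfolding N_def using 1 2 by (simp add: l_diff1 l_diff2 l_scale1 l_scale2)
qed

lemma Npow_sa: "l ((N^^k) v) w = l v ((N^^k) w)"
proof (induction k arbitrary: w)
  case 0 then show ?case by simp
next
  case (Suc k)
  have "l ((N^^Suc k) v) w = l ((N^^k) v) (N w)" by (simp add: N_sa)
  also have "\<dots> = l v ((N^^k) (N w))" by (rule Suc)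
  finally show ?case by (simp add: funpow_Suc_right del: funpow.simps)
qed

lemma P_on_Tker: "T t = 0 \<Longrightarrow> (P^^m) t = complex_of_real ((2*mu)^m) *s t"
proof (induction m)
  case 0 then show ?case by simp
next
  case (Suc m)
  have Pt: "P t = complex_of_real (2*mu) *s t" using PminusT[of t] Suc.prems by simp
  have "(P^^Suc m) t = (P^^m) (P t)" by (simp add: funpow_Suc_right del: funpow.simps)
  also have "\<dots> = complex_of_real (2*mu) *s (P^^m) t"
    unfolding Pt by (rule rlin_scale[OF rlin_funpow[OF P_rlin]])
  finally show ?case using Suc by (simp add: mult.commute)
qed

end


context ctx begin

lemma nil_of: "(T^^s) x = 0 \<Longrightarrow> nil x" unfolding nil_def by blast

lemma Tpow_add: "(T^^k) ((T^^D) u) = (T^^(k+D)) u" by (simp add: funpow_add)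

lemma Tpow_kill: "(T^^s) u = 0 \<Longrightarrow> s \<le> m \<Longrightarrow> (T^^m) u = 0"
  using rlin_ker_mono[OF T_rlin] by blast

lemma N_on_Tker: assumes "(T^^s) a = 0" "s \<ge> 1"
  shows "(N^^(s-1)) a = complex_of_real ((2*mu)^(s-1)) *s (T^^(s-1)) a"
proof -
  have "(N^^(s-1)) a = (P^^(s-1)) ((T^^(s-1)) a)"
    using N_pow funpow_comm[of T P "s-1" "s-1", OF TP_comm] by simp
  moreover have "T ((T^^(s-1)) a) = 0"
  proof -
    obtain s' where "s = Suc s'" using assms(2) by (cases s) auto
    then show ?thesis using assms(1) by simp
  qed
  ultimately show ?thesis using P_on_Tker by simp
qed

lemma exists_good:
  assumes s1: "s \<ge> 1" and xy: "(N^^s) x = 0" "(N^^s) y = 0" "l ((N^^(s-1)) x) y \<noteq> 0"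
  shows "\<exists>a. (T^^s) a = 0 \<and> l ((T^^(s-1)) a) a \<noteq> 0"
proof (rule ccontr)
  assume H: "\<not> ?thesis"
  define g where "g a c = l ((T^^(s-1)) a) c" for a c
  have gsym: "g c a = g a c" if "(T^^s) a = 0" "(T^^s) c = 0" for a c
  proof -
    have "g c a = l c ((T^^(s-1)) a)" unfolding g_def using Tpow_sym nil_of that by blast
    also have "\<dots> = g a c" unfolding g_def
      using real_sym[OF nil_of[OF that(2)] nil_Tpow[OF nil_of[OF that(1)]]] .
    finally show ?thesis .
  qed
  have g0: "g a c = 0" if "(T^^s) a = 0" "(T^^s) c = 0" for a c
  proof -
    have "(T^^s) (a + c) = 0" using that rlin_add[OF rlin_funpow[OF T_rlin]] by simp
    then have "g (a+c) (a+c) = 0" using H unfolding g_def by blast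
    moreover have "g (a+c) (a+c) = g a a + g a c + g c a + g c c"
      unfolding g_def by (simp add: rlin_add[OF rlin_funpow[OF T_rlin]] l_add1 l_add2)
    moreover have "g a a = 0" "g c c = 0" using H that unfolding g_def by blast+
    ultimately have "2 * g a c = 0" using gsym[OF that] by simp
    then show ?thesis by simp
  qed
  obtain a b where ab: "x = a + \<i> *s b" "(T^^s) a = 0" "(T^^s) b = 0" using decomp[OF xy(1)] by blast
  obtain c d where cd: "y = c + \<i> *s d" "(T^^s) c = 0" "(T^^s) d = 0" using decomp[OF xy(2)] by blast
  define \<kappa> where "\<kappa> = complex_of_real ((2*mu)^(s-1))"
  have "(N^^(s-1)) x = \<kappa> *s (T^^(s-1)) a + \<i> *s (\<kappa> *s (T^^(s-1)) b)"
    using ab N_on_Tker[OF ab(2) s1] N_on_Tker[OF ab(3) s1] unfolding \<kappa>_def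
    by (simp add: clin_add[OF clin_funpow[OF N_clin]] clin_scale[OF clin_funpow[OF N_clin]])
  then have "l ((N^^(s-1)) x) y = 0"
    using g0[of a c] g0[of a d] g0[of b c] g0[of b d] ab cd unfolding g_def
    by (simp add: l_add1 l_add2 l_scale1 l_scale2)
  then show False using xy(3) by simp
qed

definition f where "f u k = l ((T^^k) u) u"

lemma f_real: "(T^^s) u = 0 \<Longrightarrow> f u k = complex_of_real (Re (f u k))"
proof -
  assume "(T^^s) u = 0"
  then have "l ((T^^k) u) u = l u ((T^^k) u)" using real_sym nil_of nil_Tpow by blast
  then have "f u k = cnj (f u k)" unfolding f_def using l_herm[of u "(T^^k) u"] by simp
  then show ?thesis by (simp add: complex_eq_iff)
qed

lemma f_big: "(T^^s) u = 0 \<Longrightarrow> s \<le> k \<Longrightarrow> f u k = 0"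
  unfolding f_def using Tpow_kill by simp

lemma f_expand:
  assumes u: "(T^^s) u = 0"
  shows "f (u + complex_of_real r *s (T^^D) u) k
       = f u k + complex_of_real (2*r) * f u (k+D) + complex_of_real (r^2) * f u (k+2*D)"
proof -
  have nu: "nil u" using nil_of[OF u] .
  have 1: "(T^^k) (u + complex_of_real r *s (T^^D) u) = (T^^k) u + complex_of_real r *s (T^^(k+D)) u"
    by (simp add: rlin_add[OF rlin_funpow[OF T_rlin]] rlin_scale[OF rlin_funpow[OF T_rlin]] Tpow_add)
  have 2: "l ((T^^k) u) ((T^^D) u) = f u (k+D)"
    unfolding f_def using Tpow_sym[of "(T^^k) u" u D] nu nil_Tpow by (simp add: Tpow_add add.commute)
  have 3: "l ((T^^(k+D)) u) ((T^^D) u) = f u (k+2*D)"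
    unfolding f_def using Tpow_sym[of "(T^^(k+D)) u" u D] nu nil_Tpow
    by (simp add: Tpow_add add.commute add.left_commute mult_2)
  have "f (u + complex_of_real r *s (T^^D) u) k =
     l ((T^^k) u) u + complex_of_real r * l ((T^^k) u) ((T^^D) u)
     + complex_of_real r * l ((T^^(k+D)) u) u + complex_of_real r * complex_of_real r * l ((T^^(k+D)) u) ((T^^D) u)"
    unfolding f_def 1 by (simp add: l_add1 l_add2 l_scale1 l_scale2 algebra_simps)
  also have "\<dots> = f u k + complex_of_real (2*r) * f u (k+D) + complex_of_real (r^2) * f u (k+2*D)"
    using 2 3 unfolding f_def by (simp add: algebra_simps power2_eq_square)
  finally show ?thesis .
qed

lemma normalize_step:
  assumes s1: "s \<ge> 1" and a: "(T^^s) a = 0" "f a (s-1) \<noteq> 0"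
  shows "1 \<le> D \<Longrightarrow> D \<le> s \<Longrightarrow> \<exists>u. (T^^s) u = 0 \<and> f u (s-1) = f a (s-1) \<and>
              (\<forall>d. 0 < d \<and> d < D \<longrightarrow> f u (s-1-d) = 0)"
proof (induction D)
  case 0 then show ?case by simp
next
  case (Suc D)
  show ?case
  proof (cases "D = 0")
    case True then show ?thesis using a by (intro exI[of _ a]) auto
  next
    case False
    then obtain u where u: "(T^^s) u = 0" "f u (s-1) = f a (s-1)"
        "\<forall>d. 0 < d \<and> d < D \<longrightarrow> f u (s-1-d) = 0" using Suc by auto
    define \<gamma> where "\<gamma> = Re (f a (s-1))"
    define \<beta> where "\<beta> = Re (f u (s-1-D))"
    have g: "f u (s-1) = complex_of_real \<gamma>" using f_real[OF u(1), of "s-1"] u(2) unfolding \<gamma>_def by simp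
    have b: "f u (s-1-D) = complex_of_real \<beta>" using f_real[OF u(1), of "s-1-D"] unfolding \<beta>_def by simp
    have g0: "\<gamma> \<noteq> 0" using g u(2) a(2) by auto
    define r where "r = - \<beta> / (2*\<gamma>)"
    define u' where "u' = u + complex_of_real r *s (T^^D) u"
    have "(T^^s) ((T^^D) u) = (T^^D) ((T^^s) u)" by (simp add: Tpow_add add.commute)
    then have Tu': "(T^^s) u' = 0" unfolding u'_def using u(1)
      by (simp add: rlin_add[OF rlin_funpow[OF T_rlin]] rlin_scale[OF rlin_funpow[OF T_rlin]]
          rlin_0[OF rlin_funpow[OF T_rlin]])
    have fb: "f u m = 0" if "s \<le> m" for m using f_big[OF u(1) that] .
    show ?thesis
    proof (intro exI[of _ u'] conjI allI impI)
      show "(T^^s) u' = 0" by (rule Tu')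
      have "f u' (s-1) = f u (s-1)" unfolding u'_def f_expand[OF u(1)]
        using fb[of "s-1+D"] fb[of "s-1+2*D"] False s1 by simp
      then show "f u' (s-1) = f a (s-1)" using u(2) by simp
      fix d assume d: "0 < d \<and> d < Suc D"
      show "f u' (s-1-d) = 0"
      proof (cases "d < D")
        case True
        have "f u' (s-1-d) = f u (s-1-d)" unfolding u'_def f_expand[OF u(1)]
          using fb[of "s-1-d+D"] fb[of "s-1-d+2*D"] True Suc.prems s1 by simp
        then show ?thesis using u(3) d True by simp
      next
        case False
        then have dD: "d = D" using d by simp
        have "f u' (s-1-d) = f u (s-1-D) + complex_of_real (2*r) * f u (s-1) + 0"
          unfolding u'_def f_expand[OF u(1)] dD
          using fb[of "s-1-D+2*D"] Suc.prems s1 \<open>D \<noteq> 0\<close> by simp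
        also have "\<dots> = complex_of_real (\<beta> + 2*r*\<gamma>)" using b g by simp
        also have "\<beta> + 2*r*\<gamma> = 0" unfolding r_def using g0 by simp
        finally show ?thesis by simp
      qed
    qed
  qed
qed

lemma normalize:
  assumes s1: "s \<ge> 1" and a: "(T^^s) a = 0" "l ((T^^(s-1)) a) a \<noteq> 0"
  shows "\<exists>u \<sigma>. (T^^s) u = 0 \<and> (\<sigma> = 1 \<or> \<sigma> = -1) \<and>
              (\<forall>k. l ((T^^k) u) u = (if k = s-1 then \<sigma> else 0))"
proof -
  obtain u where u: "(T^^s) u = 0" "f u (s-1) = f a (s-1)"
        "\<forall>d. 0 < d \<and> d < s \<longrightarrow> f u (s-1-d) = 0"
  proof -
    have "f a (s-1) \<noteq> 0" using a(2) unfolding f_def .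
    from normalize_step[OF s1 a(1) this s1 order_refl] show ?thesis using that by blast
  qed
  define \<gamma> where "\<gamma> = Re (f a (s-1))"
  have g: "f u (s-1) = complex_of_real \<gamma>" using f_real[OF u(1), of "s-1"] u(2) unfolding \<gamma>_def by simp
  have g0: "\<gamma> \<noteq> 0" using g u(2) a(2) unfolding f_def by auto
  define \<rho> where "\<rho> = 1 / sqrt \<bar>\<gamma>\<bar>"
  define \<sigma> where "\<sigma> = (if \<gamma> > 0 then (1::complex) else -1)"
  define v where "v = complex_of_real \<rho> *s u"
  have rr: "\<rho> * \<rho> = 1 / \<bar>\<gamma>\<bar>" unfolding \<rho>_def using g0
    by (simp add: real_sqrt_mult[symmetric] del: real_sqrt_mult)
  have fv: "f v k = complex_of_real (\<rho> * \<rho>) * f u k" for k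
    unfolding v_def f_def by (simp add: rlin_scale[OF rlin_funpow[OF T_rlin]] l_scale1 l_scale2)
  show ?thesis
  proof (intro exI[of _ v] exI[of _ \<sigma>] conjI allI)
    show "(T^^s) v = 0" unfolding v_def using u(1) by (simp add: rlin_scale[OF rlin_funpow[OF T_rlin]])
    show "\<sigma> = 1 \<or> \<sigma> = -1" unfolding \<sigma>_def by simp
    fix k
    show "l ((T^^k) v) v = (if k = s-1 then \<sigma> else 0)"
    proof (cases "k = s-1")
      case True
      have "f v k = complex_of_real (\<gamma> / \<bar>\<gamma>\<bar>)" using fv[of k] True g rr by simp
      also have "\<dots> = \<sigma>" unfolding \<sigma>_def using g0 by auto
      finally show ?thesis using True unfolding f_def by simp
    next
      case False
      have "f u k = 0"
      proof (cases "k < s - 1")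
        case True then show ?thesis using u(3)[rule_format, of "s-1-k"] by simp
      next
        case False then show ?thesis using \<open>k \<noteq> s-1\<close> f_big[OF u(1)] by simp
      qed
      then show ?thesis using fv[of k] False unfolding f_def by simp
    qed
  qed
qed

end


lemma clin_diff: "clin f \<Longrightarrow> f (x - y) = f x - f y"
  using vec.linear_diff[OF clin_linear] by blast

lemma clin_sum: assumes "clin f" shows "finite S \<Longrightarrow> f (\<Sum>i\<in>S. c i *s e i) = (\<Sum>i\<in>S. c i *s f (e i))"
  by (induct S rule: finite_induct) (auto simp: clin_add[OF assms] clin_scale[OF assms] clin_0[OF assms])

context ctx begin

lemma lsum1: "finite S \<Longrightarrow> l (\<Sum>i\<in>S. c i *s e i) w = (\<Sum>i\<in>S. c i * l (e i) w)"
  by (induct S rule: finite_induct) (auto simp: l_add1 l_scale1)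

lemma Asum: "finite S \<Longrightarrow> A (\<Sum>i\<in>S. c i *s e i) = (\<Sum>i\<in>S. cnj (c i) *s A (e i))"
  by (induct S rule: finite_induct) (auto simp: A_add A_scale)

lemma construct:
  assumes s1: "s \<ge> 1" and u: "(T^^s) u = 0" and sg: "\<sigma> = 1 \<or> \<sigma> = -1"
    and fu: "\<forall>k. l ((T^^k) u) u = (if k = s-1 then \<sigma> else 0)"
  defines "e \<equiv> \<lambda>i. (T^^(s-i)) u"
  shows "cindependent_list s e \<and> cspan_list s e \<subseteq> {v. (N^^s) v = 0} \<and>
         A ` cspan_list s e \<subseteq> cspan_list s e \<and> nondegenerate_on l (cspan_list s e) \<and>
         (\<forall>i\<in>{1..s}. \<forall>j\<in>{1..s}. l (e j) (e i) = \<sigma> * S_mat s i j) \<and>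
         (\<forall>i\<in>{1..s}. A (e i) = (\<Sum>m=1..s. J_mat (complex_of_real mu) s m i *s e m))"
proof -
  have nu: "nil u" using nil_of[OF u] .
  have eT: "(T^^s) (e i) = 0" for i
  proof -
    have "(T^^s) (e i) = (T^^(s-i)) ((T^^s) u)" unfolding e_def by (simp add: Tpow_add add.commute)
    then show ?thesis using u rlin_0[OF rlin_funpow[OF T_rlin]] by simp
  qed
  have gram: "l (e j) (e i) = \<sigma> * S_mat s i j" if "i \<in> {1..s}" "j \<in> {1..s}" for i j
  proof -
    have "l (e j) (e i) = l ((T^^(s-i)) (e j)) u"
      unfolding e_def using Tpow_sym[of "(T^^(s-j)) u" u "s-i"] nu nil_Tpow by simp
    also have "\<dots> = l ((T^^((s-i)+(s-j))) u) u" unfolding e_def by (simp add: Tpow_add)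
    also have "\<dots> = (if (s-i)+(s-j) = s-1 then \<sigma> else 0)" using fu by simp
    also have "\<dots> = \<sigma> * S_mat s i j" unfolding S_mat_def using that by auto
    finally show ?thesis .
  qed
  have sig0: "\<sigma> \<noteq> 0" using sg by auto
  have coeff: "l (\<Sum>i=1..s. c i *s e i) (e j) = \<sigma> * c (s+1-j)" if j: "j \<in> {1..s}" for c j
  proof -
    have "l (\<Sum>i=1..s. c i *s e i) (e j) = (\<Sum>i=1..s. c i * l (e i) (e j))" by (simp add: lsum1)
    also have "\<dots> = (\<Sum>i=1..s. if i = s+1-j then \<sigma> * c i else 0)"
    proof (rule sum.cong[OF refl])
      fix i assume "i \<in> {1..s}"
      then show "c i * l (e i) (e j) = (if i = s+1-j then \<sigma> * c i else 0)"
        using gram[of j i] j unfolding S_mat_def by auto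
    qed
    also have "\<dots> = \<sigma> * c (s+1-j)"
    proof -
      have mem: "s+1-j \<in> {1..s}" using j by auto
      show ?thesis by (simp only: sum.delta[OF finite_atLeastAtMost] if_P[OF mem])
    qed
    finally show ?thesis .
  qed
  have indep: "cindependent_list s e"
    unfolding cindependent_list_def
  proof (intro allI impI ballI)
    fix c i assume sum0: "(\<Sum>i=1..s. c i *s e i) = 0" and i: "i \<in> {1..s}"
    have mem: "s+1-i \<in> {1..s}" using i by auto
    have "\<sigma> * c (s+1-(s+1-i)) = 0" using coeff[OF mem, of c] sum0 by simp
    then show "c i = 0" using i sig0 by simp
  qed
  have Aform: "A (e i) = (\<Sum>m=1..s. J_mat (complex_of_real mu) s m i *s e m)" if i: "i \<in> {1..s}" for i
  proof -
    have "(\<Sum>m=1..s. J_mat (complex_of_real mu) s m i *s e m)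
        = (\<Sum>m=1..s. (if m = i then complex_of_real mu *s e m else 0)) + (\<Sum>m=1..s. T_mat s m i *s e m)"
    proof -
      have "J_mat (complex_of_real mu) s m i *s e m
          = (if m = i then complex_of_real mu *s e m else 0) + T_mat s m i *s e m" for m
        unfolding J_mat_def by (simp add: vec.scale_left_distrib)
      then show ?thesis by (simp add: sum.distrib)
    qed
    also have "(\<Sum>m=1..s. (if m = i then complex_of_real mu *s e m else 0)) = complex_of_real mu *s e i"
      by (simp only: sum.delta[OF finite_atLeastAtMost] if_P[OF i])
    finally have S: "(\<Sum>m=1..s. J_mat (complex_of_real mu) s m i *s e m)
        = complex_of_real mu *s e i + (\<Sum>m=1..s. T_mat s m i *s e m)" .
    have Ae: "A (e i) = complex_of_real mu *s e i + T (e i)" unfolding T_def by simp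
    show ?thesis
    proof (cases "i = 1")
      case True
      have "(\<Sum>m=1..s. T_mat s m i *s e m) = 0"
        by (rule sum.neutral) (auto simp: T_mat_def True)
      moreover have "T (e i) = 0"
      proof -
        obtain s' where "s = Suc s'" using s1 by (cases s) auto
        then show ?thesis unfolding e_def True using u by simp
      qed
      ultimately show ?thesis using S Ae by simp
    next
      case False
      then have i2: "i \<ge> 2" "i - 1 \<in> {1..s}" using i by auto
      have "(\<Sum>m=1..s. T_mat s m i *s e m) = (\<Sum>m=1..s. if m = i - 1 then e m else 0)"
        by (rule sum.cong[OF refl]) (use i2 in \<open>auto simp: T_mat_def\<close>)
      also have "\<dots> = e (i-1)" using i2 by simp
      finally have 1: "(\<Sum>m=1..s. T_mat s m i *s e m) = e (i-1)" .
      have "T (e i) = (T^^(Suc (s-i))) u" unfolding e_def by simp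
      also have "Suc (s-i) = s - (i-1)" using i i2 by auto
      finally have "T (e i) = e (i-1)" unfolding e_def .
      then show ?thesis using S Ae 1 by simp
    qed
  qed
  have subN: "cspan_list s e \<subseteq> {v. (N^^s) v = 0}"
  proof
    fix v assume "v \<in> cspan_list s e"
    then obtain c where v: "v = (\<Sum>i=1..s. c i *s e i)" unfolding cspan_list_def by blast
    have Ne: "(N^^s) (e i) = 0" for i
    proof -
      have "(N^^s) (e i) = (P^^s) ((T^^s) (e i))"
        using N_pow funpow_comm[of T P s s, OF TP_comm] by simp
      then show ?thesis using eT rlin_0[OF rlin_funpow[OF P_rlin]] by simp
    qed
    have "(N^^s) v = (\<Sum>i=1..s. c i *s (N^^s) (e i))"
      unfolding v by (rule clin_sum[OF clin_funpow[OF N_clin]]) simp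
    then show "v \<in> {v. (N^^s) v = 0}" by (simp add: Ne)
  qed
  have Ainv: "A ` cspan_list s e \<subseteq> cspan_list s e"
  proof
    fix x assume "x \<in> A ` cspan_list s e"
    then obtain c where x: "x = A (\<Sum>i=1..s. c i *s e i)" unfolding cspan_list_def by blast
    have "x = (\<Sum>i=1..s. cnj (c i) *s (\<Sum>m=1..s. J_mat (complex_of_real mu) s m i *s e m))"
      unfolding x by (simp add: Asum Aform)
    also have "\<dots> = (\<Sum>i=1..s. \<Sum>m=1..s. (cnj (c i) * J_mat (complex_of_real mu) s m i) *s e m)"
      by (simp add: vec.scale_sum_right)
    also have "\<dots> = (\<Sum>m=1..s. \<Sum>i=1..s. (cnj (c i) * J_mat (complex_of_real mu) s m i) *s e m)"
      by (rule sum.swap)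
    also have "\<dots> = (\<Sum>m=1..s. (\<Sum>i=1..s. cnj (c i) * J_mat (complex_of_real mu) s m i) *s e m)"
      by (simp add: vec.scale_sum_left)
    finally have xx: "x = (\<Sum>m=1..s. (\<Sum>i=1..s. cnj (c i) * J_mat (complex_of_real mu) s m i) *s e m)" .
    show "x \<in> cspan_list s e" unfolding cspan_list_def
      by (rule CollectI, rule exI[of _ "\<lambda>m. \<Sum>i=1..s. cnj (c i) * J_mat (complex_of_real mu) s m i"]) (rule xx)
  qed
  have nondeg: "nondegenerate_on l (cspan_list s e)"
    unfolding nondegenerate_on_def
  proof (intro ballI impI)
    fix v assume "v \<in> cspan_list s e" and H: "\<forall>w\<in>cspan_list s e. l v w = 0"
    then obtain c where v: "v = (\<Sum>i=1..s. c i *s e i)" unfolding cspan_list_def by blast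
    have ej: "e j \<in> cspan_list s e" if "j \<in> {1..s}" for j
    proof -
      have "(\<Sum>i=1..s. (if i = j then 1 else 0) *s e i) = (\<Sum>i=1..s. if i = j then e i else 0)"
        by (rule sum.cong) auto
      also have "\<dots> = e j" using that by simp
      finally have ee: "e j = (\<Sum>i=1..s. (if i = j then 1 else 0) *s e i)" by simp
      show ?thesis unfolding cspan_list_def
        by (rule CollectI, rule exI[of _ "\<lambda>i. if i = j then 1 else 0"]) (rule ee)
    qed
    have "c i = 0" if i: "i \<in> {1..s}" for i
    proof -
      have mem: "s+1-i \<in> {1..s}" using i by auto
      have "l v (e (s+1-i)) = 0" using H ej[OF mem] by auto
      then have "\<sigma> * c (s+1-(s+1-i)) = 0" using coeff[OF mem, of c] v by simp
      then show ?thesis using i sig0 by simp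
    qed
    then show "v = 0" unfolding v by simp
  qed
  show ?thesis using indep subN Ainv nondeg gram Aform by blast
qed

end


theorem mainTheorem10:
  fixes l :: "complex^'n \<Rightarrow> complex^'n \<Rightarrow> complex"
    and A :: "complex^'n \<Rightarrow> complex^'n"
    and lam :: real
  assumes herm: "hermitian_form l"
    and nondeg: "nondegenerate_on l UNIV"
    and anti: "antilinear A"
    and sa: "l_self_adjoint l A"
    and pos: "lam\<^sup>2 > 0"
    and eig: "\<exists>v. v \<noteq> 0 \<and> A (A v) = complex_of_real (lam\<^sup>2) *s v"
  defines "s1 \<equiv> (LEAST s. s > 0 \<and> gen_ker A (complex_of_real (lam\<^sup>2)) s
                                   = gen_ker A (complex_of_real (lam\<^sup>2)) CARD('n))"
  shows "\<exists>V e (\<sigma>::complex).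
           cindependent_list s1 e \<and> V = cspan_list s1 e \<and>
           V \<subseteq> gen_ker A (complex_of_real (lam\<^sup>2)) CARD('n) \<and>
           A ` V \<subseteq> V \<and>
           nondegenerate_on l V \<and>
           (\<sigma> = 1 \<or> \<sigma> = -1) \<and>
           (\<forall>i\<in>{1..s1}. \<forall>j\<in>{1..s1}. l (e j) (e i) = \<sigma> * S_mat s1 i j) \<and>
           (\<forall>i\<in>{1..s1}. A (e i) = (\<Sum>m=1..s1. J_mat (complex_of_real \<bar>lam\<bar>) s1 m i *s e m))"
proof -
  define mu where "mu = \<bar>lam\<bar>"
  have mupos: "mu > 0" using pos unfolding mu_def by (cases "lam = 0") auto
  interpret C: ctx l A mu by unfold_locales (use herm anti sa mupos in auto)
  have Neq: "(\<lambda>x. A (A x) - complex_of_real (lam\<^sup>2) *s x) = C.N"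
    by (rule ext, simp only: C.N_def) (simp add: mu_def)
  have gk: "gen_ker A (complex_of_real (lam\<^sup>2)) k = {v. (C.N^^k) v = 0}" for k
    unfolding gen_ker_def Neq ..
  define n where "n = CARD('n)"
  have Ncl: "clin C.N" by (rule C.N_clin)
  have ex: "\<exists>s. s > 0 \<and> gen_ker A (complex_of_real (lam\<^sup>2)) s = gen_ker A (complex_of_real (lam\<^sup>2)) CARD('n)"
    by (intro exI[of _ "CARD('n)"]) simp
  have s1P: "s1 > 0 \<and> gen_ker A (complex_of_real (lam\<^sup>2)) s1 = gen_ker A (complex_of_real (lam\<^sup>2)) CARD('n)"
    unfolding s1_def by (rule LeastI_ex[OF ex])
  have s1pos: "s1 \<ge> 1" using s1P by simp
  have s1eq: "(C.N^^s1) v = 0 \<longleftrightarrow> (C.N^^n) v = 0" for v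
    using s1P unfolding gk n_def by blast
  have toN: "(C.N^^m) v = 0 \<Longrightarrow> (C.N^^n) v = 0" for m v
    unfolding n_def by (rule ker_all_in_n[OF Ncl])
  have neq: "\<exists>w. (C.N^^n) w = 0 \<and> (C.N^^(s1-1)) w \<noteq> 0"
  proof (cases "s1 - 1 = 0")
    case True
    obtain v where v: "v \<noteq> 0" "A (A v) = complex_of_real (lam\<^sup>2) *s v" using eig by blast
    have "(C.N^^1) v = 0" using v(2) by (simp only: One_nat_def funpow.simps o_apply id_apply C.N_def) (simp add: mu_def)
    then have "(C.N^^n) v = 0" by (rule toN)
    then show ?thesis using v(1) True by (intro exI[of _ v]) simp
  next
    case False
    have "s1 - 1 < s1" using s1pos by simp
    then have "\<not> (s1 - 1 > 0 \<and> gen_ker A (complex_of_real (lam\<^sup>2)) (s1-1) = gen_ker A (complex_of_real (lam\<^sup>2)) CARD('n))"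
      unfolding s1_def by (rule not_less_Least)
    then have "{v. (C.N^^(s1-1)) v = 0} \<noteq> {v. (C.N^^n) v = 0}" using False unfolding gk n_def by simp
    moreover have "{v. (C.N^^(s1-1)) v = 0} \<subseteq> {v. (C.N^^n) v = 0}" using toN by blast
    ultimately show ?thesis by blast
  qed
  then obtain w where w: "(C.N^^n) w = 0" "(C.N^^(s1-1)) w \<noteq> 0" by blast
  have ws: "(C.N^^s1) w = 0" using w(1) s1eq by blast
  define x0 where "x0 = (C.N^^(s1-1)) w"
  have "\<not> (\<forall>y. l x0 y = 0)"
    using nondeg w(2) unfolding nondegenerate_on_def x0_def by auto
  then obtain y0 where y0: "l x0 y0 \<noteq> 0" by auto
  define g where "g = C.N^^s1"
  have gcl: "clin g" unfolding g_def by (rule clin_funpow[OF Ncl])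
  have gg: "\<forall>v. g (g v) = 0 \<longrightarrow> g v = 0"
  proof (intro allI impI)
    fix v assume "g (g v) = 0"
    then have "(C.N^^(s1+s1)) v = 0" unfolding g_def by (simp add: funpow_add)
    then have "(C.N^^n) v = 0" by (rule toN)
    then show "g v = 0" unfolding g_def using s1eq[of v] by simp
  qed
  obtain z where z: "g y0 = g (g z)" using fitting[OF gcl gg] by blast
  define y where "y = y0 - g z"
  have gy: "g y = 0" unfolding y_def using z clin_diff[OF gcl] by simp
  have gx0: "g x0 = 0"
  proof -
    have "g x0 = (C.N^^(s1-1)) ((C.N^^s1) w)" unfolding g_def x0_def
      by (simp add: funpow_add[symmetric, THEN fun_cong, simplified] add.commute)
    then show ?thesis using ws clin_0[OF clin_funpow[OF Ncl]] by simp
  qed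
  have "l x0 y0 = l x0 y + l x0 (g z)" unfolding y_def by (simp add: C.l_add2[symmetric])
  moreover have "l x0 (g z) = 0" unfolding g_def using C.Npow_sa[of s1 x0 z] gx0 unfolding g_def by simp
  ultimately have lxy: "l ((C.N^^(s1-1)) w) y \<noteq> 0" using y0 unfolding x0_def by simp
  have gy': "(C.N^^s1) y = 0" using gy unfolding g_def .
  obtain a where a: "(C.T^^s1) a = 0" "l ((C.T^^(s1-1)) a) a \<noteq> 0"
    using C.exists_good[OF s1pos ws gy' lxy] by blast
  obtain u \<sigma> where u: "(C.T^^s1) u = 0" "\<sigma> = 1 \<or> \<sigma> = -1"
      "\<forall>k. l ((C.T^^k) u) u = (if k = s1-1 then \<sigma> else 0)"
    using C.normalize[OF s1pos a] by blast
  define e where "e = (\<lambda>i. (C.T^^(s1-i)) u)"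
  have R: "cindependent_list s1 e \<and> cspan_list s1 e \<subseteq> {v. (C.N^^s1) v = 0} \<and>
         A ` cspan_list s1 e \<subseteq> cspan_list s1 e \<and> nondegenerate_on l (cspan_list s1 e) \<and>
         (\<forall>i\<in>{1..s1}. \<forall>j\<in>{1..s1}. l (e j) (e i) = \<sigma> * S_mat s1 i j) \<and>
         (\<forall>i\<in>{1..s1}. A (e i) = (\<Sum>m=1..s1. J_mat (complex_of_real mu) s1 m i *s e m))"
    unfolding e_def by (rule C.construct[OF s1pos u])
  have "{v. (C.N^^s1) v = 0} \<subseteq> gen_ker A (complex_of_real (lam\<^sup>2)) CARD('n)"
    unfolding gk using s1eq unfolding n_def by auto
  then have sub: "cspan_list s1 e \<subseteq> gen_ker A (complex_of_real (lam\<^sup>2)) CARD('n)"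
    using R by (meson order_trans)
  show ?thesis
    apply (rule exI[of _ "cspan_list s1 e"], rule exI[of _ e], rule exI[of _ \<sigma>])
    using R sub u(2) unfolding mu_def by (intro conjI; (elim conjE)?; assumption?; simp)
qed


end
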